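(* Any streaming algorithm (possibly randomized, succeeding with constant probability) that outputs a multiplicative approximation, to any factor, of the optimal total weight for the weighted tree augmentation problem in the link arrival model requires $\Omega(n)$ bits of space.
   Context: Weighted tree augmentation problem: given a spanning tree $T$ on an $n$-vertex set $V$ and a set of links $L\subseteq\binom{V}{2}$ with nonnegative integer weights, find a minimum-weight $S\subseteq L$ such that $(V,E(T)\cup S)$ is $2$-edge-connected. Link arrival model: $T$ is given to the algorithm in advance (its storage not counted), and the weighted links arrive one at a time in an arbitrary order in a single pass. *)

theory Defs
  imports "HOL-Probability.Probability_Mass_Function"
begin

text \<open>Vertex set is {0..<n}. An (undirected) edge / link is a 2-element set {u,v}.\<close>

definition is_edge :: "nat \<Rightarrow> nat set \<Rightarrow> bool" where
  "is_edge n e \<longleftrightarrow> (\<exists>u v. u < n \<and> v < n \<and> u \<noteq> v \<and> e = {u, v})"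

definition connected_on :: "nat \<Rightarrow> nat set set \<Rightarrow> bool" where
  "connected_on n E \<longleftrightarrow> (\<forall>u<n. \<forall>v<n. (u, v) \<in> {(x, y). {x, y} \<in> E}\<^sup>*)"

text \<open>2-edge-connectivity of a multigraph on {0..<n} whose edges are indexed by I
  (edge i has endpoints ep i): connected, and stays connected after deleting any single edge.\<close>
definition two_edge_connected :: "nat \<Rightarrow> 'i set \<Rightarrow> ('i \<Rightarrow> nat set) \<Rightarrow> bool" where
  "two_edge_connected n I ep \<longleftrightarrow>
     connected_on n (ep ` I) \<and> (\<forall>i\<in>I. connected_on n (ep ` (I - {i})))"

definition spanning_tree :: "nat \<Rightarrow> nat set set \<Rightarrow> bool" where
  "spanning_tree n T \<longleftrightarrow> n \<ge> 1 \<and> T \<subseteq> {e. is_edge n e} \<and> connected_on n T \<and> card T = n - 1"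

text \<open>(V, E(T) \<union> S) as a multigraph (tree edges and links kept apart) is 2-edge-connected.\<close>
definition augments :: "nat \<Rightarrow> nat set set \<Rightarrow> nat set set \<Rightarrow> bool" where
  "augments n T S \<longleftrightarrow> two_edge_connected n (Inl ` T \<union> Inr ` S) (case_sum id id)"

definition valid_stream :: "nat \<Rightarrow> (nat set \<times> nat) list \<Rightarrow> bool" where
  "valid_stream n xs \<longleftrightarrow> distinct (map fst xs) \<and> (\<forall>(l, w)\<in>set xs. is_edge n l)"

definition feasible_sol :: "nat \<Rightarrow> nat set set \<Rightarrow> (nat set \<times> nat) list \<Rightarrow> (nat set \<times> nat) set \<Rightarrow> bool" where
  "feasible_sol n T xs S \<longleftrightarrow> S \<subseteq> set xs \<and> augments n T (fst ` S)"

definition tap_feasible :: "nat \<Rightarrow> nat set set \<Rightarrow> (nat set \<times> nat) list \<Rightarrow> bool" where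
  "tap_feasible n T xs \<longleftrightarrow> (\<exists>S. feasible_sol n T xs S)"

definition opt_tap :: "nat \<Rightarrow> nat set set \<Rightarrow> (nat set \<times> nat) list \<Rightarrow> nat" where
  "opt_tap n T xs = Min {sum snd S | S. feasible_sol n T xs S}"

text \<open>State of a one-pass streaming algorithm with random seed r after reading the stream.\<close>
definition run :: "('r \<Rightarrow> 's) \<Rightarrow> ('r \<Rightarrow> 's \<Rightarrow> nat set \<times> nat \<Rightarrow> 's) \<Rightarrow> 'r \<Rightarrow> (nat set \<times> nat) list \<Rightarrow> 's" where
  "run init step r xs = foldl (step r) (init r) xs"

definition good_estimate :: "real \<Rightarrow> real \<Rightarrow> real \<Rightarrow> bool" where
  "good_estimate \<alpha> opt x \<longleftrightarrow> opt / \<alpha> \<le> x \<and> x \<le> \<alpha> * opt"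

definition tap_streaming_alg ::
  "nat \<Rightarrow> nat set set \<Rightarrow> real \<Rightarrow> real \<Rightarrow> 'r pmf \<Rightarrow> ('r \<Rightarrow> 's) \<Rightarrow> ('r \<Rightarrow> 's \<Rightarrow> nat set \<times> nat \<Rightarrow> 's)
     \<Rightarrow> ('r \<Rightarrow> 's \<Rightarrow> real) \<Rightarrow> bool" where
  "tap_streaming_alg n T \<alpha> p R init step out \<longleftrightarrow>
     (\<forall>xs. valid_stream n xs \<and> tap_feasible n T xs \<longrightarrow>
        measure_pmf.prob R {r. good_estimate \<alpha> (real (opt_tap n T xs)) (out r (run init step r xs))} \<ge> p)"

text \<open>Uses at most s bits of memory: at most 2^s distinct memory states ever occur.\<close>
definition uses_space :: "nat \<Rightarrow> 'r pmf \<Rightarrow> ('r \<Rightarrow> 's) \<Rightarrow> ('r \<Rightarrow> 's \<Rightarrow> nat set \<times> nat \<Rightarrow> 's) \<Rightarrow> nat \<Rightarrow> bool" where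
  "uses_space n R init step s \<longleftrightarrow>
     (let Q = {run init step r xs | r xs. r \<in> set_pmf R \<and> valid_stream n xs}
      in finite Q \<and> card Q \<le> 2 ^ s)"

end

theory Submission
  imports Defs
begin

lemma exists_good_r:
  fixes R :: "'r pmf" and E :: "'r \<Rightarrow> 'y \<Rightarrow> bool"
  assumes Y: "finite Y" and pr: "\<forall>y\<in>Y. measure_pmf.prob R {r. E r y} \<ge> p" and q: "q < p" and ne: "Y \<noteq> {}"
  shows "\<exists>r\<in>set_pmf R. real (card {y\<in>Y. E r y}) \<ge> q * card Y"
proof (rule ccontr)
  assume "\<not> ?thesis"
  then have lt: "\<forall>r\<in>set_pmf R. real (card {y\<in>Y. E r y}) \<le> q * card Y" by force
  have "real (card {y\<in>Y. E r y}) = (\<Sum>y\<in>Y. indicator {r. E r y} r)" for r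
    using Y by (simp add: indicator_def sum.If_cases Int_def)
  then have eq: "(\<lambda>r. real (card {y\<in>Y. E r y})) = (\<lambda>r. (\<Sum>y\<in>Y. indicator {r. E r y} r))" by auto
  have "p * card Y \<le> (\<Sum>y\<in>Y. measure_pmf.prob R {r. E r y})"
    using pr sum_mono[of Y "\<lambda>_. p"] by (simp add: mult.commute)
  also have "\<dots> = (\<Sum>y\<in>Y. measure_pmf.expectation R (indicator {r. E r y}))"
    by simp
  also have "\<dots> = measure_pmf.expectation R (\<lambda>r. (\<Sum>y\<in>Y. indicator {r. E r y} r))"
    by (subst Bochner_Integration.integral_sum) (auto intro!: measure_pmf.integrable_const_bound[where B=1])
  also have "\<dots> = measure_pmf.expectation R (\<lambda>r. real (card {y\<in>Y. E r y}))"
    using eq by simp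
  also have "\<dots> \<le> measure_pmf.expectation R (\<lambda>r. q * card Y)"
    by (rule integral_mono_AE) (auto intro!: measure_pmf.integrable_const_bound[where B="card Y"] AE_pmfI card_mono simp: Y lt)
  also have "\<dots> = q * card Y" by simp
  finally have "p * card Y \<le> q * card Y" .
  with q ne Y show False by (simp add: card_gt_0_iff)
qed

lemma card_PiE_restr:
  assumes S: "S \<subseteq> {..<m}" and G1: "\<forall>i. card (G i \<inter> {..<K}) \<le> (1::nat)"
  shows "card (PiE {..<m} (\<lambda>i. if i \<in> S then G i \<inter> {..<K} else {..<K})) \<le> K ^ (m - card S)"
proof -
  have "card (PiE {..<m} (\<lambda>i. if i \<in> S then G i \<inter> {..<K} else {..<K}))
      = (\<Prod>i<m. if i \<in> S then card (G i \<inter> {..<K}) else K)"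
    by (simp add: card_PiE if_distrib cong: if_cong)
  also have "\<dots> = (\<Prod>i\<in>{..<m} \<inter> {i. i \<in> S}. card (G i \<inter> {..<K})) * (\<Prod>i\<in>{..<m} \<inter> - {i. i \<in> S}. K)"
    by (rule prod.If_cases) simp
  also have "(\<Prod>i\<in>{..<m} \<inter> {i. i \<in> S}. card (G i \<inter> {..<K})) \<le> (\<Prod>i\<in>{..<m} \<inter> {i. i \<in> S}. 1)"
    by (rule prod_mono) (use G1 in auto)
  also have "(\<Prod>i\<in>{..<m} \<inter> - {i. i \<in> S}. K) = K ^ (m - card S)"
  proof -
    have "{..<m} \<inter> - {i. i \<in> S} = {..<m} - S" by auto
    moreover have "card ({..<m} - S) = m - card S" using S by (simp add: card_Diff_subset finite_subset)
    ultimately show ?thesis by simp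
  qed
  finally show ?thesis by simp
qed

lemma count_good:
  fixes M :: "(nat \<Rightarrow> nat) \<Rightarrow> 's" and G :: "'s \<Rightarrow> nat \<Rightarrow> nat set"
  assumes Q: "finite Q" and MQ: "\<forall>x\<in>PiE {..<m} (\<lambda>_. {..<K}). M x \<in> Q"
    and G1: "\<forall>\<mu> i. card (G \<mu> i \<inter> {..<K}) \<le> 1"
  shows "card {x \<in> PiE {..<m} (\<lambda>_. {..<K}). t \<le> card {i\<in>{..<m}. x i \<in> G (M x) i}}
          \<le> card Q * 2^m * K^(m-t)"
proof -
  define X where "X = PiE {..<m} (\<lambda>_. {..<K::nat})"
  define SS where "SS = {S. S \<subseteq> {..<m::nat} \<and> card S = t}"
  define P where "P \<mu> S = PiE {..<m} (\<lambda>i. if i \<in> S then G \<mu> i \<inter> {..<K} else {..<K})" for \<mu> S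
  have sub: "{x \<in> X. t \<le> card {i\<in>{..<m}. x i \<in> G (M x) i}} \<subseteq> (\<Union>\<mu>\<in>Q. \<Union>S\<in>SS. P \<mu> S)"
  proof
    fix x assume "x \<in> {x \<in> X. t \<le> card {i\<in>{..<m}. x i \<in> G (M x) i}}"
    then have x: "x \<in> X" and c: "t \<le> card {i\<in>{..<m}. x i \<in> G (M x) i}" by auto
    obtain S where S: "S \<subseteq> {i\<in>{..<m}. x i \<in> G (M x) i}" "card S = t"
      using obtain_subset_with_card_n[OF c] by blast
    have "S \<in> SS" using S unfolding SS_def by auto
    moreover have "M x \<in> Q" using MQ x unfolding X_def by auto
    moreover have "x \<in> P (M x) S" using x S unfolding P_def X_def by (auto simp: PiE_iff)
    ultimately show "x \<in> (\<Union>\<mu>\<in>Q. \<Union>S\<in>SS. P \<mu> S)" by blast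
  qed
  have fSS: "finite SS" unfolding SS_def by auto
  have cSS: "card SS \<le> 2^m"
  proof -
    have "card SS \<le> card (Pow {..<m})" by (rule card_mono) (auto simp: SS_def)
    then show ?thesis by (simp add: card_Pow)
  qed
  have cP: "card (P \<mu> S) \<le> K^(m-t)" if "S \<in> SS" for \<mu> S
    using card_PiE_restr[of S m "G \<mu>" K] that G1 unfolding P_def SS_def by auto
  have fP: "finite (P \<mu> S)" for \<mu> S unfolding P_def by (auto intro!: finite_PiE)
  have "card {x \<in> X. t \<le> card {i\<in>{..<m}. x i \<in> G (M x) i}} \<le> card (\<Union>\<mu>\<in>Q. \<Union>S\<in>SS. P \<mu> S)"
    by (rule card_mono[OF _ sub]) (use Q fSS fP in auto)
  also have "\<dots> \<le> (\<Sum>\<mu>\<in>Q. card (\<Union>S\<in>SS. P \<mu> S))" by (rule card_UN_le[OF Q])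
  also have "\<dots> \<le> (\<Sum>\<mu>\<in>Q. \<Sum>S\<in>SS. card (P \<mu> S))" by (intro sum_mono card_UN_le fSS)
  also have "\<dots> \<le> (\<Sum>\<mu>\<in>Q. \<Sum>S\<in>SS. K^(m-t))" by (intro sum_mono cP)
  also have "\<dots> = card Q * (card SS * K^(m-t))" by simp
  also have "\<dots> \<le> card Q * (2^m * K^(m-t))" using cSS by (intro mult_le_mono2 mult_le_mono1)
  finally show ?thesis unfolding X_def by (simp add: mult.assoc)
qed


lemma conn_via0:
  assumes "\<And>v. 0 < v \<Longrightarrow> v < n \<Longrightarrow> {0,v} \<in> E \<or> (\<exists>z. {v,z} \<in> E \<and> {0,z} \<in> E)"
  shows "connected_on n E"
proof -
  let ?R = "{(x, y). {x, y} \<in> E}"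
  have h: "(0,v) \<in> ?R\<^sup>* \<and> (v,0) \<in> ?R\<^sup>*" if "v < n" for v
  proof (cases "v = 0")
    case True then show ?thesis by simp
  next
    case False
    then have "0 < v" by simp
    from assms[OF this that] show ?thesis
    proof
      assume "{0,v} \<in> E"
      then have "(0,v) \<in> ?R" "(v,0) \<in> ?R" by (auto simp: insert_commute)
      then show ?thesis by auto
    next
      assume "\<exists>z. {v,z} \<in> E \<and> {0,z} \<in> E"
      then obtain z where "{v,z} \<in> E" "{0,z} \<in> E" by blast
      then have "(0,z) \<in> ?R" "(z,v) \<in> ?R" "(v,z) \<in> ?R" "(z,0) \<in> ?R" by (auto simp: insert_commute)
      then show ?thesis by (meson converse_rtrancl_into_rtrancl r_into_rtrancl)
    qed
  qed
  show ?thesis unfolding connected_on_def using h by (meson rtrancl_trans)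
qed

lemma isolated_not_conn:
  assumes "\<forall>e\<in>E. v \<notin> e" "v < n" "u < n" "u \<noteq> v"
  shows "\<not> connected_on n E"
proof
  assume "connected_on n E"
  then have "(v,u) \<in> {(x, y). {x, y} \<in> E}\<^sup>*" using assms unfolding connected_on_def by blast
  then have "u = v"
    by (induction rule: rtrancl_induct) (use assms(1) in auto)
  with assms show False by simp
qed

definition starT :: "nat \<Rightarrow> nat set set" where
  "starT n = (\<lambda>v. {0,v}) ` {1..<n}"

lemma spanning_starT: "n \<ge> 1 \<Longrightarrow> spanning_tree n (starT n)"
  unfolding spanning_tree_def
proof (intro conjI)
  assume "n \<ge> 1"
  show "starT n \<subseteq> {e. is_edge n e}"
  proof
    fix e assume "e \<in> starT n"
    then obtain v where v: "v \<in> {1..<n}" "e = {0,v}" unfolding starT_def by blast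
    then show "e \<in> {e. is_edge n e}" unfolding is_edge_def
      by (intro CollectI exI[of _ 0] exI[of _ v]) auto
  qed
  show "connected_on n (starT n)" by (rule conn_via0) (auto simp: starT_def)
  have "inj_on (\<lambda>v. {0::nat,v}) {1..<n}" by (auto simp: inj_on_def doubleton_eq_iff)
  then show "card (starT n) = n - 1" unfolding starT_def by (simp add: card_image)
qed


definition streamA :: "nat \<Rightarrow> nat \<Rightarrow> (nat \<Rightarrow> nat) \<Rightarrow> (nat set \<times> nat) list" where
  "streamA m W x = map (\<lambda>j. ({0, Suc j}, W ^ x j)) [0..<m]"

definition streamB :: "nat \<Rightarrow> nat \<Rightarrow> (nat set \<times> nat) list" where
  "streamB m i = map (\<lambda>j. ({Suc j, Suc m}, 0)) (filter (\<lambda>j. j \<noteq> i) [0..<m]) @ [({0, Suc m}, 0)]"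

lemma inj1: "inj_on (\<lambda>j. {0::nat, Suc j}) A"
  by (auto simp: inj_on_def doubleton_eq_iff)
lemma inj2: "inj_on (\<lambda>j. {Suc j, Suc m}) A"
  by (auto simp: inj_on_def doubleton_eq_iff)

lemma edge1: "j < m \<Longrightarrow> is_edge (Suc (Suc m)) {0, Suc j}"
  unfolding is_edge_def by (intro exI[of _ 0] exI[of _ "Suc j"]) auto
lemma edge2: "j < m \<Longrightarrow> is_edge (Suc (Suc m)) {Suc j, Suc m}"
  unfolding is_edge_def by (intro exI[of _ "Suc j"] exI[of _ "Suc m"]) auto
lemma edge3: "is_edge (Suc (Suc m)) {0, Suc m}"
  unfolding is_edge_def by (intro exI[of _ 0] exI[of _ "Suc m"]) auto

lemma ne1: "{Suc j, Suc k} \<noteq> {0::nat, l}"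
proof
  assume "{Suc j, Suc k} = {0::nat, l}"
  moreover have "0 \<in> {0::nat, l}" by simp
  ultimately show False by auto
qed
lemma ne1': "{0::nat, l} \<noteq> {Suc j, Suc k}"
  using ne1 by metis
lemma ne2: "j < m \<Longrightarrow> {0, Suc j} \<noteq> {0::nat, Suc m}"
  by (auto simp: doubleton_eq_iff)

lemma mapfstA: "map fst (streamA m W x) = map (\<lambda>j. {0, Suc j}) [0..<m]"
  unfolding streamA_def by simp
lemma mapfstB: "map fst (streamB m i) = map (\<lambda>j. {Suc j, Suc m}) (filter (\<lambda>j. j \<noteq> i) [0..<m]) @ [{0, Suc m}]"
  unfolding streamB_def by simp

lemma valid_A: "valid_stream (Suc (Suc m)) (streamA m W x)"
  unfolding valid_stream_def
proof
  show "distinct (map fst (streamA m W x))" unfolding mapfstA distinct_map using inj1 by simp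
  show "\<forall>(l, w)\<in>set (streamA m W x). is_edge (Suc (Suc m)) l"
    unfolding streamA_def using edge1 by auto
qed

lemma valid_AB: "valid_stream (Suc (Suc m)) (streamA m W x @ streamB m i)"
  unfolding valid_stream_def
proof
  have d1: "distinct (map fst (streamA m W x))" unfolding mapfstA distinct_map using inj1 by simp
  have d2: "distinct (map fst (streamB m i))" unfolding mapfstB distinct_append
    using inj2 ne1' by (simp add: distinct_map image_iff)
  have d3: "set (map fst (streamA m W x)) \<inter> set (map fst (streamB m i)) = {}"
    unfolding mapfstA mapfstB using ne1 ne2 by (auto simp del: insert_commute)
  show "distinct (map fst (streamA m W x @ streamB m i))"
    using d1 d2 d3 by simp
  show "\<forall>(l, w)\<in>set (streamA m W x @ streamB m i). is_edge (Suc (Suc m)) l"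
    unfolding streamA_def streamB_def using edge1 edge2 edge3 by auto
qed


lemma memb: "a \<in> I \<Longrightarrow> a \<noteq> d \<Longrightarrow> case_sum id id a \<in> case_sum id id ` (I - {d})"
  by blast

lemma in_starT: "0 < v \<Longrightarrow> v < n \<Longrightarrow> {0,v} \<in> starT n"
  unfolding starT_def by auto

definition Fset :: "nat \<Rightarrow> nat \<Rightarrow> nat set set" where
  "Fset m i = insert {0,Suc i} (insert {0,Suc m} ((\<lambda>j. {Suc j, Suc m}) ` {j. j<m \<and> j\<noteq>i}))"

lemma conn_del:
  assumes "i < m"
  shows "connected_on (Suc (Suc m))
     (case_sum id id ` (Inl ` starT (Suc (Suc m)) \<union> Inr ` Fset m i - {d}))"
    (is "connected_on ?n (case_sum id id ` (?I - {d}))")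
proof (rule conn_via0)
  fix v :: nat assume v: "0 < v" "v < ?n"
  let ?E = "case_sum id id ` (?I - {d})"
  have both: "{0,v} \<in> ?E" if "Inl {0,v} \<in> ?I" "Inr {0,v} \<in> ?I"
  proof (cases "d = Inl {0,v}")
    case True
    then have "Inr {0,v} \<noteq> d" by simp
    from memb[OF that(2) this] show ?thesis by simp
  next
    case False
    then have "Inl {0,v} \<noteq> d" by simp
    from memb[OF that(1) this] show ?thesis by simp
  qed
  have inl: "Inl {0,v} \<in> ?I" using in_starT[OF v] by blast
  consider "v = Suc i" | "v = Suc m" | j where "j < m" "j \<noteq> i" "v = Suc j"
    using v by (cases v) (auto, metis less_antisym)
  then show "{0, v} \<in> ?E \<or> (\<exists>z. {v, z} \<in> ?E \<and> {0, z} \<in> ?E)"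
  proof cases
    case 1
    then have "Inr {0,v} \<in> ?I" unfolding Fset_def by blast
    with both inl show ?thesis by blast
  next
    case 2
    then have "Inr {0,v} \<in> ?I" unfolding Fset_def by blast
    with both inl show ?thesis by blast
  next
    case 3
    show ?thesis
    proof (cases "d = Inl {0,v}")
      case False
      then have "Inl {0,v} \<noteq> d" by simp
      from memb[OF inl this] show ?thesis by simp
    next
      case True
      have a: "Inr {v, Suc m} \<in> ?I" using 3 unfolding Fset_def by blast
      have b: "Inl {0, Suc m} \<in> ?I" using in_starT[of "Suc m" ?n] by blast
      have "Inr {v, Suc m} \<noteq> d" using True by simp
      from memb[OF a this] have "{v, Suc m} \<in> ?E" by simp
      moreover have "Inl {0, Suc m} \<noteq> d" using True 3 ne2[of j m] by auto
      from memb[OF b this] have "{0, Suc m} \<in> ?E" by simp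
      ultimately show ?thesis by (intro disjI2 exI[of _ "Suc m"] conjI)
    qed
  qed
qed

lemma augments_F:
  assumes "i < m"
  shows "augments (Suc (Suc m)) (starT (Suc (Suc m))) (Fset m i)"
  unfolding augments_def two_edge_connected_def
proof
  let ?I = "Inl ` starT (Suc (Suc m)) \<union> Inr ` Fset m i"
  have "Inl {} \<notin> ?I" unfolding starT_def by auto
  then have "?I - {Inl {}} = ?I" by blast
  then show "connected_on (Suc (Suc m)) (case_sum id id ` ?I)"
    using conn_del[OF assms, of "Inl {}"] by simp
  show "\<forall>d\<in>?I. connected_on (Suc (Suc m)) (case_sum id id ` (?I - {d}))"
    using conn_del[OF assms] by blast
qed



lemma setA: "set (streamA m W x) = (\<lambda>j. ({0, Suc j}, W ^ x j)) ` {..<m}"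
  unfolding streamA_def by (simp add: atLeast0LessThan)
lemma setB: "set (streamB m i) = insert ({0, Suc m}, 0) ((\<lambda>j. ({Suc j, Suc m}, 0)) ` {j. j < m \<and> j \<noteq> i})"
proof -
  have "set (filter (\<lambda>j. j \<noteq> i) [0..<m]) = {j. j < m \<and> j \<noteq> i}" by auto
  then show ?thesis by (simp add: streamB_def)
qed

lemma must_use:
  assumes i: "i < m" and fs: "feasible_sol (Suc (Suc m)) (starT (Suc (Suc m))) (streamA m W x @ streamB m i) S"
  shows "({0, Suc i}, W ^ x i) \<in> S"
proof (rule ccontr)
  assume nS: "({0, Suc i}, W ^ x i) \<notin> S"
  let ?n = "Suc (Suc m)"
  let ?I = "Inl ` starT ?n \<union> Inr ` fst ` S"
  let ?d = "Inl {0, Suc i} :: nat set + nat set"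
  have fs': "S \<subseteq> set (streamA m W x @ streamB m i) \<and> augments ?n (starT ?n) (fst ` S)"
    using fs unfolding feasible_sol_def .
  have sub: "S \<subseteq> set (streamA m W x @ streamB m i)" using fs' by (rule conjunct1)
  have aug: "augments ?n (starT ?n) (fst ` S)" using fs' by (rule conjunct2)
  have "{0, Suc i} \<in> starT ?n" by (rule in_starT) (use i in simp_all)
  then have dI: "?d \<in> ?I" by (rule UnI1[OF imageI])
  have "\<forall>d\<in>?I. connected_on ?n (case_sum id id ` (?I - {d}))"
    using aug unfolding augments_def two_edge_connected_def by (rule conjunct2)
  then have conn: "connected_on ?n (case_sum id id ` (?I - {?d}))"
    using dI by (rule bspec)
  have iso: "\<forall>e\<in>case_sum id id ` (?I - {?d}). Suc i \<notin> e"
  proof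
    fix e assume "e \<in> case_sum id id ` (?I - {?d})"
    then obtain a where a: "a \<in> ?I" "a \<noteq> ?d" "e = case_sum id id a" by blast
    show "Suc i \<notin> e"
    proof (cases a)
      case (Inl t)
      have t: "t \<in> starT ?n" using a(1) Inl by blast
      then obtain v where v: "t = {0,v}" unfolding starT_def by blast
      have "t \<noteq> {0, Suc i}" using a(2) Inl by simp
      then have "v \<noteq> Suc i" using v by blast
      moreover have "e = t" using a(3) Inl by simp
      ultimately show ?thesis using v by simp
    next
      case (Inr l)
      have "l \<in> fst ` S" using a(1) Inr by blast
      then obtain w' where lw: "(l, w') \<in> S" by force
      have el: "e = l" using a(3) Inr by simp
      from lw sub have "(l, w') \<in> set (streamA m W x) \<or> (l, w') \<in> set (streamB m i)" by auto
      then show ?thesis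
      proof
        assume "(l, w') \<in> set (streamA m W x)"
        then obtain j where j: "j < m" "(l, w') = ({0, Suc j}, W ^ x j)" unfolding setA by blast
        show ?thesis
        proof
          assume "Suc i \<in> e"
          then have "Suc i \<in> {0, Suc j}" using j el by simp
          then have "j = i" by simp
          then show False using nS lw j by simp
        qed
      next
        assume "(l, w') \<in> set (streamB m i)"
        then have "l = {0, Suc m} \<or> (\<exists>j. j < m \<and> j \<noteq> i \<and> l = {Suc j, Suc m})"
          unfolding setB by blast
        then show ?thesis using el i by auto
      qed
    qed
  qed
  have "\<not> connected_on ?n (case_sum id id ` (?I - {?d}))"
    by (rule isolated_not_conn[OF iso, of ?n 0]) (use i in auto)
  with conn show False by simp
qed

lemma opt_value:
  assumes i: "i < m"
  shows "tap_feasible (Suc (Suc m)) (starT (Suc (Suc m))) (streamA m W x @ streamB m i)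
    \<and> opt_tap (Suc (Suc m)) (starT (Suc (Suc m))) (streamA m W x @ streamB m i) = W ^ x i"
proof -
  let ?n = "Suc (Suc m)"
  let ?xs = "streamA m W x @ streamB m i"
  define S0 where "S0 = insert ({0, Suc i}, W ^ x i) (set (streamB m i))"
  have fS0: "fst ` S0 = Fset m i" unfolding S0_def Fset_def setB by (simp add: image_image)
  have "({0, Suc i}, W ^ x i) \<in> set (streamA m W x)" unfolding setA using i by auto
  then have "S0 \<subseteq> set ?xs" unfolding S0_def by auto
  then have feas: "feasible_sol ?n (starT ?n) ?xs S0"
    unfolding feasible_sol_def fS0 using augments_F[OF i] by simp
  have notin: "({0, Suc i}, W ^ x i) \<notin> set (streamB m i)"
    unfolding setB using i ne1' by auto
  have "sum snd (set (streamB m i)) = 0" unfolding setB by (rule sum.neutral) auto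
  then have sum0: "sum snd S0 = W ^ x i" unfolding S0_def using notin by simp
  let ?A = "{sum snd S |S. feasible_sol ?n (starT ?n) ?xs S}"
  have finA: "finite ?A"
  proof (rule finite_subset)
    show "?A \<subseteq> sum snd ` Pow (set ?xs)"
    proof
      fix y assume "y \<in> ?A"
      then obtain S where "y = sum snd S" "feasible_sol ?n (starT ?n) ?xs S" by blast
      then have "y = sum snd S" "S \<in> Pow (set ?xs)" unfolding feasible_sol_def by simp_all
      then show "y \<in> sum snd ` Pow (set ?xs)" by (rule image_eqI)
    qed
  qed simp
  have lb: "W ^ x i \<le> y" if "y \<in> ?A" for y
  proof -
    obtain S where S: "y = sum snd S" "feasible_sol ?n (starT ?n) ?xs S" using \<open>y \<in> ?A\<close> by blast
    have mem: "({0, Suc i}, W ^ x i) \<in> S" by (rule must_use[OF i S(2)])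
    have "S \<subseteq> set ?xs" using S(2) unfolding feasible_sol_def by (rule conjunct1)
    then have "finite S" by (rule finite_subset) simp
    then have "snd ({0, Suc i}, W ^ x i) \<le> sum snd S" using mem by (intro member_le_sum) auto
    then show ?thesis using S by simp
  qed
  have "W ^ x i \<in> ?A" using feas sum0[symmetric] by blast
  then have "Min ?A = W ^ x i" using finA lb by (intro Min_eqI) auto
  moreover have "tap_feasible ?n (starT ?n) ?xs" unfolding tap_feasible_def using feas by (rule exI)
  moreover have "opt_tap ?n (starT ?n) ?xs = Min ?A" by (simp only: opt_tap_def)
  ultimately show ?thesis by simp
qed



lemma ge_unique:
  assumes a: "\<alpha> \<ge> 1" and W: "real W > \<alpha> * \<alpha>"
    and g1: "good_estimate \<alpha> (real (W ^ k)) y" and g2: "good_estimate \<alpha> (real (W ^ k')) y"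
  shows "k = k'"
proof -
  have main: False if lt: "a < b" and ga: "good_estimate \<alpha> (real (W ^ a)) y" and gb: "good_estimate \<alpha> (real (W ^ b)) y" for a b
  proof -
    have apos: "\<alpha> > 0" using a by simp
    have "real (W ^ b) / \<alpha> \<le> y" "y \<le> \<alpha> * real (W ^ a)" using ga gb unfolding good_estimate_def by auto
    then have "real (W ^ b) / \<alpha> \<le> \<alpha> * real (W ^ a)" by linarith
    then have h: "real (W ^ b) \<le> \<alpha> * \<alpha> * real (W ^ a)" using apos by (simp add: field_simps)
    have "1 * 1 \<le> \<alpha> * \<alpha>" using a by (intro mult_mono) auto
    then have "real W > 1" using W by simp
    then have W1: "W \<ge> 1" by simp
    have "W ^ b = W ^ a * W ^ (b - a)" using lt by (simp add: power_add[symmetric])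
    moreover have "W ^ 1 \<le> W ^ (b - a)" using W1 lt by (intro power_increasing) auto
    moreover have "W ^ a * W ^ 1 \<le> W ^ a * W ^ (b - a)" using calculation(2) by (rule mult_le_mono2)
    ultimately have "W ^ a * W \<le> W ^ b" by simp
    then have "real (W ^ a * W) \<le> real (W ^ b)" by (simp only: of_nat_le_iff)
    then have "real (W ^ a) * real W \<le> \<alpha> * \<alpha> * real (W ^ a)" using h by simp
    moreover have "real (W ^ a) > 0" using W1 by simp
    ultimately have "real W \<le> \<alpha> * \<alpha>" by (simp add: mult.commute)
    with W show False by simp
  qed
  show ?thesis
  proof (cases k k' rule: linorder_cases)
    case less then show ?thesis using main g1 g2 by blast
  next
    case greater then show ?thesis using main g1 g2 by blast
  qed
qed


theorem mainTheorem6: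
  fixes p :: real
  assumes "p > 1/2"
  shows "\<exists>c>0. \<exists>n0::nat. \<forall>n\<ge>n0. \<forall>(\<alpha>::real) (s::nat)
           (R :: nat set set \<Rightarrow> 'r pmf) (init :: nat set set \<Rightarrow> 'r \<Rightarrow> 's)
           (step :: nat set set \<Rightarrow> 'r \<Rightarrow> 's \<Rightarrow> nat set \<times> nat \<Rightarrow> 's)
           (out :: nat set set \<Rightarrow> 'r \<Rightarrow> 's \<Rightarrow> real).
           \<alpha> \<ge> 1 \<and>
           (\<forall>T. spanning_tree n T \<longrightarrow>
              tap_streaming_alg n T \<alpha> p (R T) (init T) (step T) (out T) \<and>
              uses_space n (R T) (init T) (step T) s)
           \<longrightarrow> c * real n \<le> real s"
proof -
  define q where "q = (p + 1/2) / 2"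
  have q: "q < p" "q > 1/2" using assms unfolding q_def by auto
  define eps where "eps = q - 1/2"
  have eps: "eps > 0" using q unfolding eps_def by simp
  obtain m0 :: nat where m0: "16 / eps < 2 ^ m0" using real_arch_pow[of 2 "16/eps"] by auto
  define m1 where "m1 = max m0 4"
  show ?thesis
  proof (intro exI[of _ "1/2::real"] conjI exI[of _ "m1 + 2"] allI impI)
    show "(0::real) < 1/2" by simp
  next
    fix n :: nat and \<alpha> :: real and s :: nat and R :: "nat set set \<Rightarrow> 'r pmf"
      and init :: "nat set set \<Rightarrow> 'r \<Rightarrow> 's" and step :: "nat set set \<Rightarrow> 'r \<Rightarrow> 's \<Rightarrow> nat set \<times> nat \<Rightarrow> 's"
      and out :: "nat set set \<Rightarrow> 'r \<Rightarrow> 's \<Rightarrow> real"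
    assume n: "m1 + 2 \<le> n"
    assume H: "\<alpha> \<ge> 1 \<and> (\<forall>T. spanning_tree n T \<longrightarrow>
              tap_streaming_alg n T \<alpha> p (R T) (init T) (step T) (out T) \<and>
              uses_space n (R T) (init T) (step T) s)"
    define m where "m = n - 2"
    have nm: "n = Suc (Suc m)" using n unfolding m_def by simp
    have m4: "m \<ge> 4" "m \<ge> m0" using n unfolding m_def m1_def by auto
    define T0 where "T0 = starT n"
    have sp: "spanning_tree n T0" unfolding T0_def by (rule spanning_starT) (use nm in simp)
    have a1: "\<alpha> \<ge> 1" using H by blast
    have alg: "tap_streaming_alg n T0 \<alpha> p (R T0) (init T0) (step T0) (out T0)"
      and spc: "uses_space n (R T0) (init T0) (step T0) s" using H sp by blast+
    define K where "K = (256::nat)"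
    define W where "W = nat \<lceil>\<alpha> * \<alpha>\<rceil> + 1"
    have W: "real W > \<alpha> * \<alpha>"
    proof -
      have c1: "\<alpha> * \<alpha> \<le> of_int \<lceil>\<alpha> * \<alpha>\<rceil>" by (rule le_of_int_ceiling)
      have "0 \<le> \<alpha> * \<alpha>" by simp
      then have c2: "0 \<le> \<lceil>\<alpha> * \<alpha>\<rceil>" by linarith
      have "real W = of_int \<lceil>\<alpha> * \<alpha>\<rceil> + 1" unfolding W_def using c2 by simp
      then show ?thesis using c1 by linarith
    qed
    define X where "X = PiE {..<m} (\<lambda>_. {..<K})"
    define Y where "Y = X \<times> {..<m}"
    define run0 where "run0 = run (init T0) (step T0)"
    define E where "E r y = good_estimate \<alpha> (real (W ^ (fst y) (snd y)))
        (out T0 r (run0 r (streamA m W (fst y) @ streamB m (snd y))))" for r y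
    have finX: "finite X" unfolding X_def by (simp add: finite_PiE)
    have finY: "finite Y" unfolding Y_def using finX by simp
    have cardX: "card X = K ^ m" unfolding X_def by (simp add: card_PiE)
    have "X \<noteq> {}" using cardX finX unfolding K_def by auto
    moreover have "(0::nat) \<in> {..<m}" using m4 by simp
    ultimately have Yne: "Y \<noteq> {}" unfolding Y_def by blast
    have cardY: "card Y = card X * m" unfolding Y_def by (simp add: card_cartesian_product)
    have pr: "\<forall>y\<in>Y. measure_pmf.prob (R T0) {r. E r y} \<ge> p"
    proof
      fix y assume "y \<in> Y"
      then obtain x i where y: "y = (x, i)" "i < m" unfolding Y_def by auto
      let ?xs = "streamA m W x @ streamB m i"
      have v: "valid_stream n ?xs" unfolding nm by (rule valid_AB)
      have o: "tap_feasible n T0 ?xs \<and> opt_tap n T0 ?xs = W ^ x i"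
        unfolding nm T0_def by (rule opt_value[OF y(2)])
      have "measure_pmf.prob (R T0) {r. good_estimate \<alpha> (real (opt_tap n T0 ?xs)) (out T0 r (run (init T0) (step T0) r ?xs))} \<ge> p"
        using alg v o unfolding tap_streaming_alg_def by blast
      then show "measure_pmf.prob (R T0) {r. E r y} \<ge> p"
        using o unfolding E_def y run0_def by simp
    qed
    obtain r where r: "r \<in> set_pmf (R T0)" "real (card {y\<in>Y. E r y}) \<ge> q * card Y"
      using exists_good_r[OF finY pr q(1) Yne] by blast
    define Q where "Q = {run (init T0) (step T0) r xs | r xs. r \<in> set_pmf (R T0) \<and> valid_stream n xs}"
    have Qs: "finite Q" "card Q \<le> 2 ^ s" using spc unfolding uses_space_def Let_def Q_def by auto
    define M where "M x = run0 r (streamA m W x)" for x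
    have MQ: "\<forall>x\<in>X. M x \<in> Q"
    proof
      fix x assume "x \<in> X"
      have "valid_stream n (streamA m W x)" unfolding nm by (rule valid_A)
      then show "M x \<in> Q" unfolding M_def Q_def run0_def using r(1) by blast
    qed
    define G where "G \<mu> i = {k. good_estimate \<alpha> (real (W ^ k)) (out T0 r (foldl (step T0 r) \<mu> (streamB m i)))}" for \<mu> i
    have G1: "\<forall>\<mu> i. card (G \<mu> i \<inter> {..<K}) \<le> 1"
    proof (intro allI)
      fix \<mu> i
      have "card (G \<mu> i \<inter> {..<K}) \<le> Suc 0"
        by (subst card_le_Suc0_iff_eq) (auto simp: G_def intro: ge_unique[OF a1 W])
      then show "card (G \<mu> i \<inter> {..<K}) \<le> 1" by simp
    qed
    define C where "C x = {i\<in>{..<m}. x i \<in> G (M x) i}" for x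
    have EC: "{y\<in>Y. E r y} = Sigma X C"
    proof -
      have "E r (x, i) \<longleftrightarrow> x i \<in> G (M x) i" for x i
        unfolding E_def G_def M_def run0_def run_def by simp
      then show ?thesis unfolding Y_def C_def by auto
    qed
    have cardN: "card {y\<in>Y. E r y} = (\<Sum>x\<in>X. card (C x))"
      unfolding EC by (rule card_SigmaI) (use finX in \<open>auto simp: C_def\<close>)
    define t where "t = m div 2"
    define good where "good = {x\<in>X. t \<le> card (C x)}"
    have cg: "card good \<le> card Q * 2^m * K^(m-t)"
      unfolding good_def C_def X_def by (rule count_good[OF Qs(1) MQ[unfolded X_def] G1])
    have Cm: "card (C x) \<le> m" for x
    proof -
      have "card (C x) \<le> card {..<m}" by (rule card_mono) (auto simp: C_def)
      then show ?thesis by simp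
    qed
    have sumb: "(\<Sum>x\<in>X. card (C x)) \<le> m * card good + t * card X"
    proof -
      have gX: "good \<subseteq> X" unfolding good_def by auto
      have "(\<Sum>x\<in>X. card (C x)) = (\<Sum>x\<in>X - good. card (C x)) + (\<Sum>x\<in>good. card (C x))"
        by (rule sum.subset_diff[OF gX finX])
      also have "(\<Sum>x\<in>good. card (C x)) \<le> card good * m"
        using sum_bounded_above[of good "\<lambda>x. card (C x)" m] Cm by simp
      also have "(\<Sum>x\<in>X - good. card (C x)) \<le> card (X - good) * t"
        using sum_bounded_above[of "X - good" "\<lambda>x. card (C x)" t] by (force simp: good_def)
      also have "card (X - good) \<le> card X" using finX by (rule card_mono) auto
      finally show ?thesis by (simp add: mult.commute add.commute)
    qed
    have t2: "2 * t \<le> m" "m \<le> 2 * t + 1" unfolding t_def by auto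
    have mpos: "real m > 0" using m4 by simp
    have key1: "q * (real (card X) * m) \<le> real m * card good + real t * card X"
    proof -
      have "q * (real (card X) * m) \<le> real (\<Sum>x\<in>X. card (C x))"
        using r(2) cardN cardY by simp
      also have "\<dots> \<le> real (m * card good + t * card X)" using sumb by (simp only: of_nat_le_iff)
      finally show ?thesis by simp
    qed
    have "real t * card X \<le> (real m / 2) * card X" using t2 by (intro mult_right_mono) auto
    with key1 have "eps * (real m * card X) \<le> real m * card good"
      unfolding eps_def by (simp add: algebra_simps)
    then have key2: "eps * card X \<le> card good" using mpos by (simp add: mult.left_commute)
    have "real (card good) \<le> real (card Q * 2^m * K^(m-t))" using cg by (simp only: of_nat_le_iff)
    also have "\<dots> \<le> 2^s * 2^m * real K^(m-t)" using Qs(2)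
      by (simp add: mult_right_mono)
    finally have key3: "eps * real K ^ m \<le> 2^s * 2^m * real K^(m-t)" using key2 cardX by simp
    have "real K ^ m = real K ^ t * real K ^ (m - t)" using t2 by (simp add: power_add[symmetric])
    with key3 have "eps * real K ^ t * real K ^ (m - t) \<le> 2^s * 2^m * real K^(m-t)" by (simp add: mult.assoc)
    moreover have "real K ^ (m - t) > 0" unfolding K_def by simp
    ultimately have key4: "eps * real K ^ t \<le> 2^s * 2^m" by simp
    have sm: "m \<le> s"
    proof (rule ccontr)
      assume "\<not> m \<le> s"
      then have "s + m \<le> 2 * m" by simp
      then have "(2::real) ^ (s + m) \<le> 2 ^ (2 * m)" by (rule power_increasing) simp
      then have a: "(2::real)^s * 2^m \<le> 2 ^ (2 * m)" by (simp add: power_add)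
      have "real K ^ t = 2 ^ (8 * t)" unfolding K_def by (simp add: power_mult)
      moreover have "(2::real) ^ (4 * m) \<le> 2 ^ (8 * t + 4)" using t2 by (intro power_increasing) auto
      ultimately have "(2::real) ^ (4 * m) \<le> 16 * real K ^ t" by (simp add: power_add)
      then have "eps * 2 ^ (4 * m) \<le> 16 * (eps * real K ^ t)" using eps by (simp add: mult_left_mono)
      also have "\<dots> \<le> 16 * 2 ^ (2 * m)" using key4 a by simp
      finally have b0: "eps * 2 ^ (4 * m) \<le> 16 * (2::real) ^ (2 * m)" .
      have "(4 * m) = 2 * m + 2 * m" by simp
      then have "(2::real) ^ (4 * m) = 2 ^ (2 * m) * 2 ^ (2 * m)" by (simp only: power_add)
      with b0 have "(eps * 2 ^ (2 * m)) * 2 ^ (2 * m) \<le> 16 * (2::real) ^ (2 * m)"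
        by (simp only: mult.assoc)
      then have c: "eps * 2 ^ (2 * m) \<le> 16" by (rule mult_right_le_imp_le) simp
      have "(2::real) ^ m0 \<le> 2 ^ (2 * m)" using m4 by (intro power_increasing) auto
      then have d: "eps * 2 ^ m0 \<le> eps * 2 ^ (2 * m)" using eps by (intro mult_left_mono) auto
      have "16 / eps * eps < 2 ^ m0 * eps" using m0 eps by (rule mult_strict_right_mono)
      then have "16 < eps * 2 ^ m0" using eps by (simp add: mult.commute)
      with c d show False by linarith
    qed
    show "1 / 2 * real n \<le> real s" using sm nm m4 by simp
  qed
qed

end
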